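(* Consider the SBBS with $d=2$ balls, error probability $\varepsilon\in[0,1]$ and any capacity $c\in\{1,2,\dots\}\cup\{\infty\}$, started with the two balls adjacent ($W_0=0$). Let $X$ be the bulk process, $X_0=0$, $X_{t+1}-X_t=\eta^{(2)}_t-\eta^{(1)}_t$. Then almost surely, for all $t\ge0$, $$W_t=X_t-\min_{0\le s\le t}X_s.$$
   Context: Stochastic box-ball system (SBBS). Fix an error probability $\varepsilon\in[0,1]$ and a capacity $c\in\{1,2,\dots\}\cup\{\infty\}$. A configuration is $\zeta\in\{0,1\}^{\mathbb N}$ with finitely many $1$'s (balls). The SBBS is driven as follows: at each time $t$ there are i.i.d. coins $\eta^{(1)}_t,\dots,\eta^{(d)}_t\sim\mathrm{Bernoulli}(1-\varepsilon)$ ($d$ = number of balls), independent over $t$. To produce $\zeta_{t+1}$ from $\zeta_t$, a carrier starts empty at site $1$ and scans sites $1,2,3,\dots$ in order: when it reaches the $i$-th ball (from the left) of $\zeta_t$ it picks it up iff $\eta_t^{(i)}=1$ and its current load is $<c$ (otherwise the ball stays); when it reaches an empty site while its load is $\ge1$, it drops one ball there (load decreases by $1$). The number $d$ of balls is conserved; with $d=2$ and ball positions $\zeta^{(1)}_t<\zeta^{(2)}_t$ the gap process is $W_t=\zeta^{(2)}_t-\zeta^{(1)}_t-1$. *)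

theory Defs
  imports "HOL-Probability.Probability" "HOL-Library.Extended_Nat"
begin

text \<open>Configurations: a finite prefix of sites 1,2,...,L as a bool list
(list index i corresponds to site i+1, True = ball); all sites beyond are empty.\<close>

text \<open>Arguments: capacity c, coins eta (eta i = coin of the
i-th ball from the left, i >= 1), index of next ball, current load, remaining sites.
After the listed sites, all sites are empty and the carrier drops one ball per site.\<close>
fun carry :: "enat \<Rightarrow> (nat \<Rightarrow> bool) \<Rightarrow> nat \<Rightarrow> nat \<Rightarrow> bool list \<Rightarrow> bool list" where
  "carry c eta i load [] = replicate load True"
| "carry c eta i load (b # bs) =
     (if b then
        (if eta i \<and> enat load < c then False # carry c eta (Suc i) (Suc load) bs
         else True # carry c eta (Suc i) load bs)
      else
        (if load \<ge> 1 then True # carry c eta i (load - 1) bs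
         else False # carry c eta i load bs))"

definition sbbs_step :: "enat \<Rightarrow> (nat \<Rightarrow> bool) \<Rightarrow> bool list \<Rightarrow> bool list" where
  "sbbs_step c eta z = carry c eta 1 0 z"

definition coins2 :: "bool \<times> bool \<Rightarrow> nat \<Rightarrow> bool" where
  "coins2 e i = (if i = 1 then fst e else if i = 2 then snd e else False)"

fun sbbs2 :: "enat \<Rightarrow> bool list \<Rightarrow> (bool \<times> bool) stream \<Rightarrow> nat \<Rightarrow> bool list" where
  "sbbs2 c z0 \<omega> 0 = z0"
| "sbbs2 c z0 \<omega> (Suc t) = sbbs_step c (coins2 (\<omega> !! t)) (sbbs2 c z0 \<omega> t)"

definition ball_pos :: "bool list \<Rightarrow> nat list" where
  "ball_pos z = filter (\<lambda>k. z ! (k - 1)) [1..<Suc (length z)]"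

definition gap :: "bool list \<Rightarrow> int" where
  "gap z = int (ball_pos z ! 1) - int (ball_pos z ! 0) - 1"

definition bulk :: "(bool \<times> bool) stream \<Rightarrow> nat \<Rightarrow> int" where
  "bulk \<omega> t = (\<Sum>s<t. of_bool (snd (\<omega> !! s)) - of_bool (fst (\<omega> !! s)))"

definition coin_space :: "real \<Rightarrow> (bool \<times> bool) stream measure" where
  "coin_space eps = stream_space (measure_pmf
      (pair_pmf (bernoulli_pmf (1 - eps)) (bernoulli_pmf (1 - eps))))"

end

theory Submission
  imports Defs
begin

lemma carry_repF0: "carry c eta i 0 (replicate n False @ bs) = replicate n False @ carry c eta i 0 bs"
  by (induction n) auto

lemma carry_drop: "carry c eta i L (replicate k False) = replicate L True @ replicate (k - L) False"
proof (induction k arbitrary: L)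
  case 0 then show ?case by simp
next
  case (Suc k)
  show ?case
  proof (cases L)
    case 0 then show ?thesis using Suc[of 0] by simp
  next
    case (Suc m) then show ?thesis using Suc.IH[of m] by simp
  qed
qed

lemma rep_shift: "replicate n x @ x # ys = x # replicate n x @ ys"
  by (induction n) auto

definition cfg :: "nat \<Rightarrow> nat \<Rightarrow> nat \<Rightarrow> bool list" where
  "cfg a w k = replicate a False @ True # replicate w False @ True # replicate k False"

fun bp :: "nat \<Rightarrow> bool list \<Rightarrow> nat list" where
  "bp n [] = []"
| "bp n (b # bs) = (if b then [n] else []) @ bp (Suc n) bs"

lemma filter_bp: "filter (\<lambda>j. xs ! (j - n)) [n..<n + length xs] = bp n xs"
proof (induction xs arbitrary: n)
  case Nil then show ?case by simp
next
  case (Cons x xs)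
  have u: "[n..<n + length (x # xs)] = n # [Suc n..<Suc n + length xs]"
    using upt_conv_Cons[of n "Suc n + length xs"] by simp
  have "filter (\<lambda>j. (x # xs) ! (j - n)) [Suc n..<Suc n + length xs]
      = filter (\<lambda>j. xs ! (j - Suc n)) [Suc n..<Suc n + length xs]"
  proof (rule filter_cong)
    fix j assume "j \<in> set [Suc n..<Suc n + length xs]"
    then have "j - n = Suc (j - Suc n)" by auto
    then show "(x # xs) ! (j - n) = xs ! (j - Suc n)" by simp
  qed simp
  then show ?case unfolding u using Cons.IH[of "Suc n"] by (cases x) (simp_all del: upt_Suc)
qed

lemma ball_pos_bp: "ball_pos z = bp 1 z"
  using filter_bp[of z 1] unfolding ball_pos_def by simp

lemma bp_repF: "bp n (replicate a False @ bs) = bp (n + a) bs"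
  by (induction a arbitrary: n) auto

lemma bp_repF_only: "bp n (replicate a False) = []"
  using bp_repF[of n a "[]"] by simp

lemma gap_cfg: "gap (cfg a w k) = int w"
proof -
  have "bp 1 (cfg a w k) = [1 + a, Suc (1 + a) + w]"
    unfolding cfg_def by (simp add: bp_repF bp_repF_only)
  then show ?thesis unfolding gap_def ball_pos_bp by simp
qed

lemma step_cfg:
  assumes c: "c \<ge> 1"
  shows "\<exists>a' k'. sbbs_step c (coins2 (e1, e2)) (cfg a w k) =
     cfg a' (if w = 0 \<and> e1 \<and> \<not> e2 then 0 else
             nat (int w + of_bool e2 - of_bool e1)) k'"
proof -
  have c0: "enat 0 < c" using c by (cases c) (auto simp: one_enat_def zero_enat_def)
  let ?eta = "coins2 (e1, e2)"
  have e: "?eta 1 = e1" "?eta 2 = e2" by (auto simp: coins2_def)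
  show ?thesis
  proof (cases w)
    case 0
    show ?thesis
    proof (cases e1)
      case True
      note e1 = True
      show ?thesis
      proof (cases "e2 \<and> enat 1 < c")
        case True
        then have "sbbs_step c ?eta (cfg a w k) = cfg (a+2) 0 (k - 2)"
          using 0 e1 c0 e unfolding sbbs_step_def cfg_def
          by (simp add: carry_repF0 carry_drop coins2_def rep_shift replicate_append_same numeral_2_eq_2 replicate_add rep_shift)
        then show ?thesis using True e1 0 by auto
      next
        case False
        then have "sbbs_step c ?eta (cfg a w k) = cfg (a+1) 0 (k - 1)"
          using 0 e1 c0 e unfolding sbbs_step_def cfg_def
          by (auto simp add: carry_repF0 carry_drop coins2_def rep_shift replicate_append_same one_enat_def)
        then show ?thesis using False e1 0 by (cases e2) auto
      qed
    next
      case False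
      note e1 = False
      show ?thesis
      proof (cases e2)
        case True
        then have "sbbs_step c ?eta (cfg a w k) = cfg a 1 (k - 1)"
          using 0 e1 c0 e unfolding sbbs_step_def cfg_def
          by (simp add: carry_repF0 carry_drop coins2_def rep_shift replicate_append_same)
        then show ?thesis using True e1 0 by auto
      next
        case False
        then have "sbbs_step c ?eta (cfg a w k) = cfg a 0 k"
          using 0 e1 c0 e unfolding sbbs_step_def cfg_def
          by (simp add: carry_repF0 carry_drop coins2_def rep_shift replicate_append_same)
        then show ?thesis using False e1 0 by auto
      qed
    qed
  next
    case (Suc m)
    show ?thesis
    proof (cases e1)
      case True
      note e1 = True
      show ?thesis
      proof (cases e2)
        case True
        then have "sbbs_step c ?eta (cfg a w k) = cfg (a+1) w (k - 1)"
          using Suc e1 c0 e unfolding sbbs_step_def cfg_def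
          by (simp add: carry_repF0 carry_drop coins2_def rep_shift replicate_append_same)
        moreover have "nat (1 + int m) = Suc m" by simp
        ultimately show ?thesis using True e1 Suc by auto
      next
        case False
        then have "sbbs_step c ?eta (cfg a w k) = cfg (a+1) m k"
          using Suc e1 c0 e unfolding sbbs_step_def cfg_def
          by (simp add: carry_repF0 carry_drop coins2_def rep_shift replicate_append_same)
        then show ?thesis using False e1 Suc by auto
      qed
    next
      case False
      note e1 = False
      show ?thesis
      proof (cases e2)
        case True
        then have "sbbs_step c ?eta (cfg a w k) = cfg a (Suc w) (k - 1)"
          using Suc e1 c0 e unfolding sbbs_step_def cfg_def
          by (simp add: carry_repF0 carry_drop coins2_def rep_shift replicate_append_same)
        moreover have "nat (2 + int m) = Suc (Suc m)" by simp
        ultimately show ?thesis using True e1 Suc by auto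
      next
        case False
        then have "sbbs_step c ?eta (cfg a w k) = cfg a w k"
          using Suc e1 c0 e unfolding sbbs_step_def cfg_def
          by (simp add: carry_repF0 carry_drop coins2_def rep_shift replicate_append_same)
        moreover have "nat (1 + int m) = Suc m" by simp
        ultimately show ?thesis using False e1 Suc by auto
      qed
    qed
  qed
qed

lemma bulk_Suc: "bulk \<omega> (Suc t) = bulk \<omega> t + (of_bool (snd (\<omega> !! t)) - of_bool (fst (\<omega> !! t)))"
  unfolding bulk_def by simp

lemma Min_Suc: "Min (bulk \<omega> ` {0..Suc t}) = min (Min (bulk \<omega> ` {0..t})) (bulk \<omega> (Suc t))"
proof -
  have "{0..Suc t} = insert (Suc t) {0..t}" by auto
  then have "Min (bulk \<omega> ` {0..Suc t}) = min (bulk \<omega> (Suc t)) (Min (bulk \<omega> ` {0..t}))"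
    by (simp add: Min_insert)
  then show ?thesis by simp
qed

lemma Min_le: "Min (bulk \<omega> ` {0..t}) \<le> bulk \<omega> t"
  by (rule Min_le) auto

lemma invariant:
  assumes c: "c \<ge> 1" and p: "p \<ge> 1"
  shows "\<exists>a k. sbbs2 c (replicate (p - 1) False @ [True, True]) \<omega> t
            = cfg a (nat (bulk \<omega> t - Min (bulk \<omega> ` {0..t}))) k"
proof (induction t)
  case 0
  have "replicate (p - 1) False @ [True, True] = cfg (p - 1) 0 0" by (simp add: cfg_def)
  then show ?case by (auto simp add: bulk_def)
next
  case (Suc t)
  then obtain a k where ak: "sbbs2 c (replicate (p - 1) False @ [True, True]) \<omega> t
            = cfg a (nat (bulk \<omega> t - Min (bulk \<omega> ` {0..t}))) k" by blast
  obtain e1 e2 where eq: "\<omega> !! t = (e1, e2)" by (cases "\<omega> !! t") auto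
  define M where "M = Min (bulk \<omega> ` {0..t})"
  define B where "B = bulk \<omega> t"
  have MB: "M \<le> B" unfolding M_def B_def by (rule Min_le)
  obtain a' k' where st: "sbbs_step c (coins2 (e1, e2)) (cfg a (nat (B - M)) k) =
     cfg a' (if nat (B - M) = 0 \<and> e1 \<and> \<not> e2 then 0 else
             nat (int (nat (B - M)) + of_bool e2 - of_bool e1)) k'"
    using step_cfg[OF c] by blast
  have "(if nat (B - M) = 0 \<and> e1 \<and> \<not> e2 then 0 else
             nat (int (nat (B - M)) + of_bool e2 - of_bool e1))
        = nat (bulk \<omega> (Suc t) - Min (bulk \<omega> ` {0..Suc t}))"
    unfolding Min_Suc bulk_Suc eq M_def[symmetric] B_def[symmetric]
    using MB by (cases e1; cases e2) (auto simp: min_def)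
  then show ?case using ak st eq unfolding M_def B_def by auto
qed

theorem mainTheorem10:
  fixes eps :: real and c :: enat and p :: nat
  assumes "0 \<le> eps" and "eps \<le> 1" and "c \<ge> 1" and "p \<ge> 1"
  shows "AE \<omega> in coin_space eps.
           \<forall>t. gap (sbbs2 c (replicate (p - 1) False @ [True, True]) \<omega> t)
               = bulk \<omega> t - Min (bulk \<omega> ` {0..t})"
proof (rule AE_I2, rule allI)
  fix \<omega> t
  obtain a k where "sbbs2 c (replicate (p - 1) False @ [True, True]) \<omega> t
            = cfg a (nat (bulk \<omega> t - Min (bulk \<omega> ` {0..t}))) k"
    using invariant[OF assms(3,4)] by blast
  moreover have "Min (bulk \<omega> ` {0..t}) \<le> bulk \<omega> t" by (rule Min_le)
  ultimately show "gap (sbbs2 c (replicate (p - 1) False @ [True, True]) \<omega> t)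
               = bulk \<omega> t - Min (bulk \<omega> ` {0..t})" by (simp add: gap_cfg)
qed

end
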